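(* Let $f:\mathbb{R}^\ell\times\mathbb{R}^m\to\mathbb{R}^\ell$ be $C^1$, let $\Lambda$ be a parameter shift with limits $\lambda_\pm$, and let $X$ define a stable path. With $B_n(s)=[D_xf(X(s),\Lambda(s))]^n$, there exists $N\in\mathbb{N}$ such that $\|B_n(s)\|<\frac14$ for all $s\in\mathbb{R}$ and all $n\ge N$ (Euclidean-induced matrix norm).
   Context: A parameter shift is a $C^1$ function $\Lambda:\mathbb{R}\to\mathbb{R}^m$ with $\lim_{s\to\pm\infty}\Lambda(s)=\lambda_\pm$ and $\lim_{s\to\pm\infty}\Lambda'(s)=0$. A stable path is given by $X:\mathbb{R}\to\mathbb{R}^\ell$ such that: $X(s)$ is a fixed point of $f(\cdot,\Lambda(s))$ for every $s$; $\{(s,X(s))\}$ is a connected curve; the limits $X_\pm=\lim_{s\to\pm\infty}X(s)$ exist and are fixed points of $f(\cdot,\lambda_\pm)$; and the spectral radius of $D_xf(X(s),\Lambda(s))$ is $<1$ for all $s\in\mathbb{R}\cup\{\pm\infty\}$ (with $X(\pm\infty)=X_\pm$, $\Lambda(\pm\infty)=\lambda_\pm$). *)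

theory Defs
  imports "HOL-Analysis.Analysis"
begin

text \<open>C^1 map on a finite-dimensional normed space: differentiable everywhere with
  continuous (in operator norm) Frechet derivative.\<close>
definition C1_map :: "('a::real_normed_vector \<Rightarrow> 'b::real_normed_vector) \<Rightarrow> bool" where
  "C1_map f \<longleftrightarrow> (\<forall>p. f differentiable (at p)) \<and>
     continuous_on UNIV (\<lambda>p. Blinfun (frechet_derivative f (at p)))"

text \<open>Partial derivative D_x f(x,lam) of f : R^l x R^m -> R^l, as an l x l matrix.\<close>
definition Dx :: "((real^'l) \<times> (real^'m) \<Rightarrow> real^'l) \<Rightarrow> real^'l \<Rightarrow> real^'m \<Rightarrow> real^'l^'l" where
  "Dx f x lam = matrix (\<lambda>v. frechet_derivative f (at (x, lam)) (v, 0))"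

text \<open>Spectral radius of a real square matrix: largest modulus of a complex eigenvalue.\<close>
definition cmat :: "real^'n^'n \<Rightarrow> complex^'n^'n" where
  "cmat A = (\<chi> i j. complex_of_real (A $ i $ j))"

definition spectral_radius_mat :: "real^'n^'n \<Rightarrow> real" where
  "spectral_radius_mat A = Max {cmod z | z. det (mat z - cmat A) = 0}"

text \<open>Parameter shift: C^1 curve with limits lm at -inf, lp at +inf, derivative -> 0.\<close>
definition parameter_shift :: "(real \<Rightarrow> 'm::euclidean_space) \<Rightarrow> 'm \<Rightarrow> 'm \<Rightarrow> bool" where
  "parameter_shift \<Lambda> lm lp \<longleftrightarrow>
     (\<exists>\<Lambda>'. (\<forall>s. (\<Lambda> has_vector_derivative \<Lambda>' s) (at s)) \<and> continuous_on UNIV \<Lambda>' \<and>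
        (\<Lambda> \<longlongrightarrow> lp) at_top \<and> (\<Lambda> \<longlongrightarrow> lm) at_bot \<and>
        (\<Lambda>' \<longlongrightarrow> 0) at_top \<and> (\<Lambda>' \<longlongrightarrow> 0) at_bot)"

text \<open>Stable path X for f along the parameter shift \<Lambda> (with limits lm, lp),
  with end states Xm (at -inf) and Xp (at +inf).\<close>
definition stable_path ::
  "((real^'l) \<times> (real^'m) \<Rightarrow> real^'l) \<Rightarrow> (real \<Rightarrow> real^'m) \<Rightarrow> real^'m \<Rightarrow> real^'m
     \<Rightarrow> (real \<Rightarrow> real^'l) \<Rightarrow> real^'l \<Rightarrow> real^'l \<Rightarrow> bool" where
  "stable_path f \<Lambda> lm lp X Xm Xp \<longleftrightarrow>
     (\<forall>s. f (X s, \<Lambda> s) = X s) \<and>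
     connected (range (\<lambda>s. (s, X s))) \<and>
     (X \<longlongrightarrow> Xp) at_top \<and> (X \<longlongrightarrow> Xm) at_bot \<and>
     f (Xp, lp) = Xp \<and> f (Xm, lm) = Xm \<and>
     (\<forall>s. spectral_radius_mat (Dx f (X s) (\<Lambda> s)) < 1) \<and>
     spectral_radius_mat (Dx f Xp lp) < 1 \<and>
     spectral_radius_mat (Dx f Xm lm) < 1"

end

theory Submission
  imports Defs "Jordan_Normal_Form.Spectral_Radius"
begin

no_notation Matrix.vec_index (infixl "$" 100)

fun mpow :: "('a::semiring_1)^'n^'n \<Rightarrow> nat \<Rightarrow> 'a^'n^'n" where
  "mpow B 0 = Finite_Cartesian_Product.mat 1"
| "mpow B (Suc k) = mpow B k ** B"

lemma mpow_commute: "B ** mpow B k = mpow B k ** B"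
  by (induction k) (simp_all add: matrix_mul_assoc)

lemma mpow_vec: "((*v) (B::real^'n^'n)) ^^ k = (*v) (mpow B k)"
proof (induction k)
  case 0 then show ?case by (simp add: fun_eq_iff)
next
  case (Suc k) then show ?case
    by (simp add: fun_eq_iff matrix_vector_mul_assoc mpow_commute)
qed

lemma mpow_add: "mpow B (m + n) = mpow B m ** mpow B n"
  by (induction n) (simp_all add: matrix_mul_assoc)

lemma mpow_mult: "mpow B (m * n) = mpow (mpow B m) n"
  by (induction n) (simp_all add: mpow_add add.commute mpow_commute)

definition enorm :: "real^'n^'n \<Rightarrow> real" where
  "enorm M = (\<Sum>i\<in>UNIV. \<Sum>j\<in>UNIV. \<bar>M $ i $ j\<bar>)"

lemma enorm_nonneg: "0 \<le> enorm M"
  unfolding enorm_def by (intro sum_nonneg) auto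

lemma onorm_le_enorm: "onorm ((*v) M) \<le> enorm M"
proof (rule onorm_bound[OF enorm_nonneg])
  fix x
  have "norm (M *v x) \<le> (\<Sum>i\<in>UNIV. \<bar>(M *v x) $ i\<bar>)" by (rule norm_le_l1_cart)
  also have "\<dots> \<le> (\<Sum>i\<in>UNIV. \<Sum>j\<in>UNIV. \<bar>M $ i $ j\<bar> * norm x)"
  proof (rule sum_mono)
    fix i
    have "\<bar>(M *v x) $ i\<bar> = \<bar>\<Sum>j\<in>UNIV. M $ i $ j * x $ j\<bar>"
      by (simp add: matrix_vector_mult_def)
    also have "\<dots> \<le> (\<Sum>j\<in>UNIV. \<bar>M $ i $ j * x $ j\<bar>)" by (rule sum_abs)
    also have "\<dots> \<le> (\<Sum>j\<in>UNIV. \<bar>M $ i $ j\<bar> * norm x)"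
      by (intro sum_mono) (simp add: abs_mult mult_left_mono component_le_norm_cart)
    finally show "\<bar>(M *v x) $ i\<bar> \<le> (\<Sum>j\<in>UNIV. \<bar>M $ i $ j\<bar> * norm x)" .
  qed
  also have "\<dots> = enorm M * norm x"
    by (simp add: enorm_def sum_distrib_right)
  finally show "norm (M *v x) \<le> enorm M * norm x" .
qed

lemma enorm_mult: "enorm (M ** P) \<le> enorm M * enorm P"
proof -
  have "enorm (M ** P) = (\<Sum>i\<in>UNIV. \<Sum>j\<in>UNIV. \<bar>\<Sum>k\<in>UNIV. M $ i $ k * P $ k $ j\<bar>)"
    by (simp add: enorm_def matrix_matrix_mult_def)
  also have "\<dots> \<le> (\<Sum>i\<in>UNIV. \<Sum>j\<in>UNIV. \<Sum>k\<in>UNIV. \<bar>M $ i $ k\<bar> * \<bar>P $ k $ j\<bar>)"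
    by (intro sum_mono order_trans[OF sum_abs]) (simp add: abs_mult)
  also have "\<dots> = (\<Sum>i\<in>UNIV. \<Sum>k\<in>UNIV. \<bar>M $ i $ k\<bar> * (\<Sum>j\<in>UNIV. \<bar>P $ k $ j\<bar>))"
    apply (rule sum.cong[OF refl])
    apply (subst sum.swap)
    apply (simp add: sum_distrib_left)
    done
  also have "\<dots> \<le> (\<Sum>i\<in>UNIV. \<Sum>k\<in>UNIV. \<bar>M $ i $ k\<bar> * enorm P)"
  proof (intro sum_mono mult_left_mono)
    fix k
    show "(\<Sum>j\<in>UNIV. \<bar>P $ k $ j\<bar>) \<le> enorm P"
      unfolding enorm_def
      by (rule member_le_sum[of k UNIV "\<lambda>k. \<Sum>j\<in>UNIV. \<bar>P $ k $ j\<bar>"]) (auto intro: sum_nonneg)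
  qed auto
  also have "\<dots> = enorm M * enorm P"
    by (simp add: enorm_def sum_distrib_right)
  finally show ?thesis .
qed

lemma enorm_one: "enorm (Finite_Cartesian_Product.mat 1 :: real^'n^'n) = real CARD('n)"
proof -
  have "\<And>i::'n. (\<Sum>j\<in>UNIV. \<bar>(Finite_Cartesian_Product.mat 1 :: real^'n^'n) $ i $ j\<bar>) = 1"
  proof -
    fix i :: 'n
    have "\<And>j. \<bar>(Finite_Cartesian_Product.mat 1 :: real^'n^'n) $ i $ j\<bar> = (if i = j then 1 else 0)"
      by (simp add: Finite_Cartesian_Product.mat_def)
    then show "(\<Sum>j\<in>UNIV. \<bar>(Finite_Cartesian_Product.mat 1 :: real^'n^'n) $ i $ j\<bar>) = 1"
      by simp
  qed
  then show ?thesis by (simp add: enorm_def)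
qed

lemma enorm_mpow: "enorm (mpow P q) \<le> real CARD('n) * enorm (P::real^'n^'n) ^ q"
proof (induction q)
  case 0 then show ?case by (simp add: enorm_one)
next
  case (Suc q)
  have "enorm (mpow P (Suc q)) \<le> enorm (mpow P q) * enorm P" by (simp add: enorm_mult)
  also have "\<dots> \<le> real CARD('n) * enorm P ^ q * enorm P"
    by (rule mult_right_mono[OF Suc enorm_nonneg])
  finally show ?case by (simp add: algebra_simps)
qed


definition toJ :: "(nat \<Rightarrow> 'n) \<Rightarrow> 'a^'n^'n \<Rightarrow> 'a Matrix.mat" where
  "toJ ix B = Matrix.mat CARD('n::finite) CARD('n) (\<lambda>(i,j). B $ ix i $ ix j)"

definition toJv :: "(nat \<Rightarrow> 'n) \<Rightarrow> 'a^'n \<Rightarrow> 'a Matrix.vec" where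
  "toJv ix x = Matrix.vec CARD('n::finite) (\<lambda>i. x $ ix i)"

lemma toJ_carrier: "toJ (ix :: nat \<Rightarrow> 'n::finite) B \<in> carrier_mat CARD('n::finite) CARD('n)"
  by (simp add: toJ_def)

lemma toJv_carrier: "toJv (ix :: nat \<Rightarrow> 'n::finite) x \<in> carrier_vec CARD('n::finite)"
  by (simp add: toJv_def)

context
  fixes ix :: "nat \<Rightarrow> 'n::finite"
  assumes bij: "bij_betw ix {0..<CARD('n)} (UNIV::'n set)"
begin

lemma sum_ix: "(\<Sum>l = 0..<CARD('n). g (ix l)) = (\<Sum>k\<in>UNIV. g k)"
  by (rule sum.reindex_bij_betw[OF bij])

lemma ix_inj: "i < CARD('n) \<Longrightarrow> j < CARD('n) \<Longrightarrow> ix i = ix j \<longleftrightarrow> i = j"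
  using bij_betw_imp_inj_on[OF bij] by (auto simp: inj_on_def)

lemma ix_surj: "\<exists>i<CARD('n). ix i = k"
  using bij_betw_imp_surj_on[OF bij] by (metis UNIV_I atLeastLessThan_iff imageE)

lemma toJ_mult: "toJ ix (B ** C) = toJ ix B * toJ ix (C :: 'a::comm_semiring_1^'n^'n)"
proof (rule eq_matI)
  fix i j assume ij: "i < dim_row (toJ ix B * toJ ix C)" "j < dim_col (toJ ix B * toJ ix C)"
  then have i: "i < CARD('n)" and j: "j < CARD('n)" by (auto simp: toJ_def)
  have "(toJ ix B * toJ ix C) $$ (i, j) = (\<Sum>l = 0..<CARD('n). B $ ix i $ ix l * C $ ix l $ ix j)"
    using i j by (simp add: toJ_def scalar_prod_def)
  also have "\<dots> = (\<Sum>k\<in>UNIV. B $ ix i $ k * C $ k $ ix j)"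
    by (rule sum_ix)
  also have "\<dots> = toJ ix (B ** C) $$ (i, j)"
    using i j by (simp add: toJ_def matrix_matrix_mult_def)
  finally show "toJ ix (B ** C) $$ (i, j) = (toJ ix B * toJ ix C) $$ (i, j)" by simp
qed (auto simp: toJ_def)

lemma toJ_one: "toJ ix (Finite_Cartesian_Product.mat 1 :: 'a::semiring_1^'n^'n) = 1\<^sub>m CARD('n)"
proof (rule eq_matI)
  fix i j assume "i < dim_row (1\<^sub>m CARD('n) :: 'a Matrix.mat)" "j < dim_col (1\<^sub>m CARD('n) :: 'a Matrix.mat)"
  then have i: "i < CARD('n)" and j: "j < CARD('n)" by auto
  show "toJ ix (Finite_Cartesian_Product.mat 1 :: 'a::semiring_1^'n^'n) $$ (i, j) = 1\<^sub>m CARD('n) $$ (i, j)"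
    using i j ix_inj[OF i j] by (simp add: toJ_def Finite_Cartesian_Product.mat_def)
qed (auto simp: toJ_def)

lemma toJ_mpow: "toJ ix (mpow (B :: 'a::comm_semiring_1^'n^'n) k) = toJ ix B ^\<^sub>m k"
proof (induction k)
  case 0
  have "dim_row (toJ ix B) = CARD('n)" by (simp add: toJ_def)
  then show ?case by (simp add: toJ_one)
next
  case (Suc k) then show ?case by (simp add: toJ_mult)
qed

lemma toJv_mult: "toJ ix B *\<^sub>v toJv ix x = toJv ix (B *v (x :: 'a::comm_semiring_1^'n))"
proof (rule eq_vecI)
  fix i assume "i < dim_vec (toJv ix (B *v x))"
  then have i: "i < CARD('n)" by (simp add: toJv_def)
  have "Matrix.vec_index (toJ ix B *\<^sub>v toJv ix x) i = (\<Sum>l = 0..<CARD('n). B $ ix i $ ix l * x $ ix l)"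
    using i by (simp add: toJ_def toJv_def scalar_prod_def)
  also have "\<dots> = (\<Sum>k\<in>UNIV. B $ ix i $ k * x $ k)"
    by (rule sum_ix)
  also have "\<dots> = Matrix.vec_index (toJv ix (B *v x)) i"
    using i by (simp add: toJv_def matrix_vector_mult_def)
  finally show "Matrix.vec_index (toJ ix B *\<^sub>v toJv ix x) i = Matrix.vec_index (toJv ix (B *v x)) i" .
qed (auto simp: toJ_def toJv_def)

lemma toJv_smult: "toJv ix (e *s x) = e \<cdot>\<^sub>v toJv ix (x :: 'a::semiring_1^'n)"
  by (rule eq_vecI) (auto simp: toJv_def)

lemma toJv_inj: "toJv ix x = toJv ix y \<Longrightarrow> x = y"
proof -
  assume eq: "toJv ix x = toJv ix y"
  show "x = y"
  proof (rule Finite_Cartesian_Product.vec_eq_iff[THEN iffD2], rule allI)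
    fix k
    obtain i where i: "i < CARD('n)" "ix i = k" using ix_surj by blast
    have "Matrix.vec_index (toJv ix x) i = Matrix.vec_index (toJv ix y) i" using eq by simp
    then show "x $ k = y $ k" using i by (simp add: toJv_def)
  qed
qed

lemma toJv_zero: "toJv ix (0::'a::zero^'n) = 0\<^sub>v CARD('n)"
  by (rule eq_vecI) (auto simp: toJv_def)

lemma toJv_surj: "v \<in> carrier_vec CARD('n) \<Longrightarrow> \<exists>x. toJv ix x = v"
proof -
  assume v: "v \<in> carrier_vec CARD('n)"
  define x where "x = (\<chi> k. Matrix.vec_index v (inv_into {0..<CARD('n)} ix k))"
  have "toJv ix x = v"
  proof (rule eq_vecI)
    fix i assume "i < dim_vec v"
    then have i: "i < CARD('n)" using v by simp
    have "inv_into {0..<CARD('n)} ix (ix i) = i"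
      using i bij_betw_imp_inj_on[OF bij] by (simp add: inv_into_f_f)
    then show "Matrix.vec_index (toJv ix x) i = Matrix.vec_index v i"
      using i by (simp add: toJv_def x_def)
  qed (use v in \<open>auto simp: toJv_def\<close>)
  then show ?thesis by blast
qed

lemma eig_toJ: "eigenvalue (toJ ix B) e \<longleftrightarrow> (\<exists>x. x \<noteq> 0 \<and> B *v x = e *s (x :: 'a::field^'n))"
proof
  assume "eigenvalue (toJ ix B) e"
  then obtain v where v: "v \<in> carrier_vec CARD('n)" "v \<noteq> 0\<^sub>v CARD('n)" "toJ ix B *\<^sub>v v = e \<cdot>\<^sub>v v"
    by (auto simp: eigenvalue_def eigenvector_def toJ_def)
  obtain x where x: "toJv ix x = v" using toJv_surj[OF v(1)] by blast
  have "toJv ix (B *v x) = toJv ix (e *s x)"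
    using v(3) x by (simp add: toJv_mult[symmetric] toJv_smult)
  then have "B *v x = e *s x" by (rule toJv_inj)
  moreover have "x \<noteq> 0" using v(2) x toJv_zero by auto
  ultimately show "\<exists>x. x \<noteq> 0 \<and> B *v x = e *s x" by blast
next
  assume "\<exists>x. x \<noteq> 0 \<and> B *v x = e *s x"
  then obtain x where x: "x \<noteq> 0" "B *v x = e *s x" by blast
  have "toJv ix x \<noteq> 0\<^sub>v CARD('n)"
    using x(1) toJv_inj toJv_zero by metis
  moreover have "toJ ix B *\<^sub>v toJv ix x = e \<cdot>\<^sub>v toJv ix x"
    by (simp add: toJv_mult x(2) toJv_smult)
  ultimately show "eigenvalue (toJ ix B) e"
    unfolding eigenvalue_def eigenvector_def
    by (intro exI[of _ "toJv ix x"]) (simp add: toJv_carrier toJ_def)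
qed

end

lemma det_eig: "Determinants.det (Finite_Cartesian_Product.mat e - B) = 0 \<longleftrightarrow>
    (\<exists>x. x \<noteq> 0 \<and> B *v x = e *s (x :: 'a::field^'n))"
proof -
  have me: "Finite_Cartesian_Product.mat e *v x = e *s x" for x :: "'a^'n"
  proof -
    have "\<And>i. (\<Sum>j\<in>UNIV. (Finite_Cartesian_Product.mat e :: 'a^'n^'n) $ i $ j * x $ j) = e * x $ i"
    proof -
      fix i :: 'n
      have "\<And>j. (Finite_Cartesian_Product.mat e :: 'a^'n^'n) $ i $ j * x $ j = (if i = j then e * x $ i else 0)"
        by (simp add: Finite_Cartesian_Product.mat_def)
      then show "(\<Sum>j\<in>UNIV. (Finite_Cartesian_Product.mat e :: 'a^'n^'n) $ i $ j * x $ j) = e * x $ i"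
        by simp
    qed
    then show ?thesis by (simp add: Finite_Cartesian_Product.vec_eq_iff matrix_vector_mult_def)
  qed
  have mv: "(Finite_Cartesian_Product.mat e - B) *v x = e *s x - B *v x" for x
    by (simp add: matrix_vector_mult_diff_rdistrib me)
  have "Determinants.det (Finite_Cartesian_Product.mat e - B) = 0 \<longleftrightarrow>
        \<not> (\<forall>x. (Finite_Cartesian_Product.mat e - B) *v x = 0 \<longrightarrow> x = 0)"
  proof -
    let ?M = "Finite_Cartesian_Product.mat e - B"
    have "Determinants.det ?M \<noteq> 0 \<longleftrightarrow> invertible ?M" by (rule invertible_det_nz[symmetric])
    also have "\<dots> \<longleftrightarrow> (\<exists>C::'a^'n^'n. C ** ?M = Finite_Cartesian_Product.mat 1)" by (rule invertible_left_inverse)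
    also have "\<dots> \<longleftrightarrow> (\<forall>x. ?M *v x = 0 \<longrightarrow> x = 0)" by (rule matrix_left_invertible_ker)
    finally show ?thesis by blast
  qed
  also have "\<dots> \<longleftrightarrow> (\<exists>x. x \<noteq> 0 \<and> B *v x = e *s x)"
    by (auto simp: mv) (metis)
  finally show ?thesis .
qed


lemma cmat_mult: "cmat (P ** Q) = cmat P ** cmat Q"
  by (simp add: Finite_Cartesian_Product.vec_eq_iff cmat_def matrix_matrix_mult_def)

lemma cmat_one: "cmat (Finite_Cartesian_Product.mat 1) = Finite_Cartesian_Product.mat 1"
  by (simp add: Finite_Cartesian_Product.vec_eq_iff cmat_def Finite_Cartesian_Product.mat_def)

lemma cmat_mpow: "cmat (mpow A k) = mpow (cmat A) k"
  by (induction k) (simp_all add: cmat_mult cmat_one)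

lemma spec_decay:
  fixes A :: "real^'n^'n"
  assumes sr: "spectral_radius_mat A < 1"
  shows "\<exists>c r. 0 < r \<and> r < 1 \<and> (\<forall>k i j. \<bar>mpow A k $ i $ j\<bar> \<le> c * r ^ k)"
proof -
  obtain ix :: "nat \<Rightarrow> 'n" where bij: "bij_betw ix {0..<CARD('n)} UNIV"
    using ex_bij_betw_nat_finite[of "UNIV::'n set"] by auto
  have n0: "0 < CARD('n)" by simp
  define C where "C = cmat A"
  define S where "S = {z. Determinants.det (Finite_Cartesian_Product.mat z - C) = 0}"
  have S_spec: "S = spectrum (toJ ix C)"
  proof (rule Set.set_eqI)
    fix z
    show "z \<in> S \<longleftrightarrow> z \<in> spectrum (toJ ix C)"
    proof -
      have "z \<in> S \<longleftrightarrow> Determinants.det (Finite_Cartesian_Product.mat z - C) = 0" by (simp add: S_def)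
      also have "\<dots> \<longleftrightarrow> (\<exists>x. x \<noteq> 0 \<and> C *v x = z *s x)" by (rule det_eig)
      also have "\<dots> \<longleftrightarrow> eigenvalue (toJ ix C) z" by (rule eig_toJ[OF bij, symmetric])
      also have "\<dots> \<longleftrightarrow> z \<in> spectrum (toJ ix C)" by (simp add: spectrum_def)
      finally show ?thesis .
    qed
  qed
  have finS: "finite S" using card_finite_spectrum(1)[OF toJ_carrier] S_spec by simp
  have neS: "S \<noteq> {}" using spectrum_non_empty[OF toJ_carrier n0] S_spec by simp
  define \<rho> where "\<rho> = spectral_radius_mat A"
  have rho: "\<rho> = Max (cmod ` S)"
    unfolding \<rho>_def spectral_radius_mat_def S_def C_def by (rule arg_cong[where f=Max]) auto
  have le: "cmod z \<le> \<rho>" if "z \<in> S" for z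
    unfolding rho using finS that by (intro Max_ge) auto
  obtain z0 where "z0 \<in> S" using neS by blast
  then have rho0: "0 \<le> \<rho>" using le[of z0] norm_ge_zero[of z0] by linarith
  define r where "r = (1 + \<rho>) / 2"
  have r0: "0 < r" and r1: "r < 1" and rr: "\<rho> < r" using rho0 sr by (auto simp: r_def \<rho>_def)
  define B' where "B' = (\<chi> i j. C $ i $ j / complex_of_real r)"
  have CB: "C $ i $ j = complex_of_real r * B' $ i $ j" for i j
    using r0 by (simp add: B'_def)
  have eigB: "cmod e \<le> \<rho> / r" if "eigenvalue (toJ ix B') e" for e
  proof -
    have "\<exists>x. x \<noteq> 0 \<and> B' *v x = e *s x" using that by (simp only: eig_toJ[OF bij])
    then obtain x where x: "x \<noteq> 0" "B' *v x = e *s x" by blast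
    have "C *v x = complex_of_real r *s (B' *v x)"
      by (simp add: Finite_Cartesian_Product.vec_eq_iff matrix_vector_mult_def CB sum_distrib_left mult.assoc)
    also have "\<dots> = (complex_of_real r * e) *s x" by (simp add: x(2))
    finally have Cx: "C *v x = (complex_of_real r * e) *s x" .
    have "complex_of_real r * e \<in> S" unfolding S_def mem_Collect_eq det_eig
      using x(1) Cx by (intro exI[of _ x]) simp
    then have "cmod (complex_of_real r * e) \<le> \<rho>" by (rule le)
    then have "r * cmod e \<le> \<rho>" using r0 by (simp add: norm_mult)
    then show ?thesis using r0 by (simp add: field_simps)
  qed
  have "spectral_radius (toJ ix B') < 1"
  proof -
    obtain e where e: "spectral_radius (toJ ix B') = norm e" "e \<in> spectrum (toJ ix B')"
      using spectral_radius_mem_max(1)[OF toJ_carrier n0] by blast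
    have "cmod e \<le> \<rho> / r" using eigB e(2) by (simp add: spectrum_def)
    also have "\<dots> < 1" using rr r0 by simp
    finally show ?thesis using e(1) by simp
  qed
  then obtain c where c: "\<And>k. norm_bound (toJ ix B' ^\<^sub>m k) c"
    using spectral_radius_jnf_norm_bound_less_1_upper_triangular[OF toJ_carrier] by blast
  have Bb: "cmod (mpow B' k $ a $ b) \<le> c" for k a b
  proof -
    obtain i where i: "i < CARD('n)" "ix i = a" using ix_surj[OF bij] by blast
    obtain j where j: "j < CARD('n)" "ix j = b" using ix_surj[OF bij] by blast
    have e1: "toJ ix (mpow B' k) $$ (i, j) = mpow B' k $ a $ b" using i j by (simp add: toJ_def)
    have d: "dim_row (toJ ix (mpow B' k)) = CARD('n)" "dim_col (toJ ix (mpow B' k)) = CARD('n)"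
      by (simp_all add: toJ_def)
    from c[of k] have "\<forall>i j. i < dim_row (toJ ix (mpow B' k)) \<longrightarrow> j < dim_col (toJ ix (mpow B' k))
        \<longrightarrow> norm (toJ ix (mpow B' k) $$ (i, j)) \<le> c"
      unfolding norm_bound_def toJ_mpow[OF bij, symmetric] .
    then have "norm (toJ ix (mpow B' k) $$ (i, j)) \<le> c" using d i(1) j(1) by simp
    then show ?thesis using e1 by simp
  qed
  have powC: "mpow C k $ a $ b = complex_of_real r ^ k * mpow B' k $ a $ b" for k a b
  proof (induction k arbitrary: a b)
    case 0 then show ?case by (simp add: Finite_Cartesian_Product.mat_def)
  next
    case (Suc k)
    have "mpow C (Suc k) $ a $ b = (\<Sum>l\<in>UNIV. mpow C k $ a $ l * C $ l $ b)"
      by (simp add: matrix_matrix_mult_def)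
    also have "\<dots> = (\<Sum>l\<in>UNIV. complex_of_real r ^ Suc k * (mpow B' k $ a $ l * B' $ l $ b))"
      by (simp add: Suc CB algebra_simps)
    also have "\<dots> = complex_of_real r ^ Suc k * mpow B' (Suc k) $ a $ b"
      by (simp add: matrix_matrix_mult_def sum_distrib_left)
    finally show ?case .
  qed
  have "\<bar>mpow A k $ i $ j\<bar> \<le> c * r ^ k" for k i j
  proof -
    have "\<bar>mpow A k $ i $ j\<bar> = cmod (cmat (mpow A k) $ i $ j)" by (simp add: cmat_def)
    also have "\<dots> = cmod (mpow C k $ i $ j)" by (simp add: cmat_mpow C_def)
    also have "\<dots> = r ^ k * cmod (mpow B' k $ i $ j)"
      using r0 by (simp add: powC norm_mult norm_power)
    also have "\<dots> \<le> r ^ k * c" using Bb r0 by (intro mult_left_mono) auto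
    finally show ?thesis by (simp add: mult.commute)
  qed
  then show ?thesis using r0 r1 by blast
qed

lemma spec_enorm:
  fixes A :: "real^'n^'n"
  assumes sr: "spectral_radius_mat A < 1"
  shows "\<exists>p. enorm (mpow A p) < 1/2"
proof -
  obtain c r where r: "0 < r" "r < 1" and b: "\<And>k i j. \<bar>mpow A k $ i $ j\<bar> \<le> c * r ^ k"
    using spec_decay[OF sr] by blast
  define K where "K = real (CARD('n)) ^ 2 * \<bar>c\<bar> + 1"
  have K: "0 < K" by (simp add: K_def add_nonneg_pos)
  obtain p where p: "r ^ p < 1 / (2 * K)" using real_arch_pow_inv[of "1/(2*K)" r] r K by auto
  have "enorm (mpow A p) \<le> (\<Sum>i\<in>(UNIV::'n set). \<Sum>j\<in>(UNIV::'n set). \<bar>c\<bar> * r ^ p)"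
    unfolding enorm_def
    by (intro sum_mono order_trans[OF b]) (simp add: mult_right_mono r(1) less_imp_le)
  also have "\<dots> = real (CARD('n)) ^ 2 * \<bar>c\<bar> * r ^ p" by (simp add: power2_eq_square)
  also have "\<dots> \<le> K * r ^ p" unfolding K_def using r by (intro mult_right_mono) auto
  also have "\<dots> < K * (1 / (2 * K))" using p K by (intro mult_strict_left_mono) auto
  also have "\<dots> = 1/2" using K by simp
  finally show ?thesis by blast
qed


lemma cont_mpow: "continuous_on UNIV (\<lambda>B::real^'n^'n. mpow B p)"
proof (induction p)
  case 0 then show ?case by (simp add: continuous_on_const)
next
  case (Suc p)
  have "continuous_on UNIV (\<lambda>B::real^'n^'n. \<chi> i j. \<Sum>k\<in>UNIV. mpow B p $ i $ k * B $ k $ j)"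
    by (intro continuous_intros Suc.IH continuous_on_id)
  then show ?case by (simp add: matrix_matrix_mult_def)
qed

lemma cont_enorm: "continuous_on S (enorm :: real^'n^'n \<Rightarrow> real)"
  unfolding enorm_def[abs_def] by (intro continuous_intros continuous_on_id)

lemma local_uniform:
  fixes A :: "real^'n^'n"
  assumes sr: "spectral_radius_mat A < 1"
  shows "\<exists>U N. open U \<and> A \<in> U \<and> (\<forall>B\<in>U. \<forall>n\<ge>N. enorm (mpow B n) < 1/4)"
proof -
  obtain p where p: "enorm (mpow A p) < 1/2" using spec_enorm[OF sr] by blast
  have p0: "p \<noteq> 0"
  proof
    assume "p = 0"
    then have "enorm (mpow A p) = real CARD('n)" by (simp add: enorm_one)
    moreover have "real CARD('n) \<ge> 1" by simp
    ultimately show False using p by simp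
  qed
  define E where "E = enorm A + 1"
  have E1: "1 \<le> E" using enorm_nonneg[of A] by (simp add: E_def)
  define U where "U = {B::real^'n^'n. enorm (mpow B p) < 1/2} \<inter> {B. enorm B < E}"
  have "open {B::real^'n^'n. enorm (mpow B p) < 1/2}"
    by (rule open_Collect_less[OF continuous_on_compose[OF cont_mpow cont_enorm, unfolded o_def]])
      (simp add: continuous_on_const)
  moreover have "open {B::real^'n^'n. enorm B < E}"
    by (rule open_Collect_less[OF cont_enorm]) (simp add: continuous_on_const)
  ultimately have oU: "open U" unfolding U_def by (rule open_Int)
  have AU: "A \<in> U" using p by (simp add: U_def E_def)
  define K where "K = real CARD('n)"
  have K0: "0 < K" by (simp add: K_def)
  define L where "L = K * K * E ^ p"
  have L0: "0 < L" using K0 E1 by (simp add: L_def)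
  obtain q0 where q0: "(1/2::real) ^ q0 < 1 / (4 * L)"
    using real_arch_pow_inv[of "1 / (4 * L)" "1/2::real"] L0 by auto
  have bound: "enorm (mpow B n) < 1/4" if B: "B \<in> U" and n: "n \<ge> q0 * p" for B n
  proof -
    define q where "q = n div p"
    define t where "t = n mod p"
    have nqt: "n = p * q + t" by (simp add: q_def t_def)
    have qq0: "q0 \<le> q" unfolding q_def using n p0
      by (metis div_le_mono div_mult_self_is_m gr0I)
    have tp: "t \<le> p" unfolding t_def using p0 by (simp add: less_imp_le)
    have Bp: "enorm (mpow B p) < 1/2" and BE: "enorm B < E" using B by (auto simp: U_def)
    have "enorm (mpow B n) = enorm (mpow (mpow B p) q ** mpow B t)"
      by (simp add: nqt mpow_add mpow_mult)
    also have "\<dots> \<le> enorm (mpow (mpow B p) q) * enorm (mpow B t)" by (rule enorm_mult)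
    also have "\<dots> \<le> (K * (1/2) ^ q) * (K * E ^ p)"
    proof (rule mult_mono)
      have "enorm (mpow (mpow B p) q) \<le> K * enorm (mpow B p) ^ q"
        unfolding K_def by (rule enorm_mpow)
      also have "\<dots> \<le> K * (1/2) ^ q"
        using K0 Bp enorm_nonneg by (intro mult_left_mono power_mono) auto
      finally show "enorm (mpow (mpow B p) q) \<le> K * (1/2) ^ q" .
      have "enorm (mpow B t) \<le> K * enorm B ^ t" unfolding K_def by (rule enorm_mpow)
      also have "\<dots> \<le> K * E ^ t"
        using K0 BE enorm_nonneg by (intro mult_left_mono power_mono) auto
      also have "\<dots> \<le> K * E ^ p"
        using K0 E1 tp by (intro mult_left_mono power_increasing) auto
      finally show "enorm (mpow B t) \<le> K * E ^ p" .
    qed (use K0 enorm_nonneg in auto)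
    also have "\<dots> = L * (1/2) ^ q" by (simp add: L_def)
    also have "\<dots> \<le> L * (1/2) ^ q0"
      using L0 qq0 by (intro mult_left_mono power_decreasing) auto
    also have "\<dots> < L * (1 / (4 * L))" using L0 q0 by (intro mult_strict_left_mono) auto
    also have "\<dots> = 1/4" using L0 by simp
    finally show ?thesis .
  qed
  show ?thesis using oU AU bound by blast
qed

lemma compact_uniform:
  fixes K :: "(real^'n^'n) set"
  assumes "compact K" and sr: "\<And>A. A \<in> K \<Longrightarrow> spectral_radius_mat A < 1"
  shows "\<exists>N. \<forall>B\<in>K. \<forall>n\<ge>N. enorm (mpow B n) < 1/4"
proof -
  have "\<forall>A\<in>K. \<exists>W. open (fst W) \<and> A \<in> fst W \<and> (\<forall>B\<in>fst W. \<forall>n\<ge>snd W. enorm (mpow B n) < 1/4)"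
    using local_uniform[OF sr] by fastforce
  then obtain W where W: "\<And>A. A \<in> K \<Longrightarrow> open (fst (W A)) \<and> A \<in> fst (W A) \<and>
      (\<forall>B\<in>fst (W A). \<forall>n\<ge>snd (W A). enorm (mpow B n) < 1/4)"
    by metis
  have cov: "K \<subseteq> \<Union> ((\<lambda>A. fst (W A)) ` K)" using W by blast
  obtain C where C: "C \<subseteq> K" "finite C" "K \<subseteq> \<Union> ((\<lambda>A. fst (W A)) ` C)"
    using compactE_image[OF assms(1), of K "\<lambda>A. fst (W A)"] W cov by blast
  define N where "N = (\<Sum>A\<in>C. snd (W A))"
  have "\<forall>B\<in>K. \<forall>n\<ge>N. enorm (mpow B n) < 1/4"
  proof (intro ballI allI impI)
    fix B n assume B: "B \<in> K" and n: "N \<le> n"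
    obtain A where A: "A \<in> C" "B \<in> fst (W A)" using C(3) B by blast
    have "snd (W A) \<le> N" unfolding N_def by (rule member_le_sum) (use A C in auto)
    then show "enorm (mpow B n) < 1/4" using W[of A] A C(1) n by auto
  qed
  then show ?thesis by blast
qed



lemma graph_sep:
  fixes Y :: "real \<Rightarrow> 'a::real_normed_vector"
  assumes conn: "connected (range (\<lambda>s. (s, Y s)))"
    and d: "0 < \<delta>" and e: "0 < \<epsilon>"
    and gap: "\<And>s. \<bar>s - s0\<bar> < \<delta> \<Longrightarrow> norm (Y s - Y s0) < \<epsilon> \<Longrightarrow> norm (Y s - Y s0) < \<epsilon>/2"
    and t1: "s0 < t1" "t1 < s0 + \<delta>"
  shows "norm (Y t1 - Y s0) < \<epsilon>"
proof (rule ccontr)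
  assume "\<not> norm (Y t1 - Y s0) < \<epsilon>"
  then have far: "\<epsilon> \<le> norm (Y t1 - Y s0)" by simp
  define y0 where "y0 = Y s0"
  define G where "G = range (\<lambda>s. (s, Y s))"
  define OU where "OU = {p::real\<times>'a. fst p < s0} \<union>
      ({p. s0 - \<delta> < fst p} \<inter> {p. fst p < t1} \<inter> {p. norm (snd p - y0) < \<epsilon>})"
  define OV where "OV = {p::real\<times>'a. t1 < fst p} \<union>
      ({p. s0 < fst p} \<inter> {p. fst p < s0 + \<delta>} \<inter> {p. \<epsilon>/2 < norm (snd p - y0)})"
  have oU: "open OU" unfolding OU_def
    by (intro open_Un open_Int open_Collect_less continuous_intros continuous_on_id)
  have oV: "open OV" unfolding OV_def
    by (intro open_Un open_Int open_Collect_less continuous_intros continuous_on_id)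
  have cover: "G \<subseteq> OU \<union> OV"
  proof
    fix p assume "p \<in> G"
    then obtain s where p: "p = (s, Y s)" by (auto simp: G_def)
    consider "s < s0" | "s = s0" | "s0 < s" "s < t1" | "s = t1" | "t1 < s" by linarith
    then show "p \<in> OU \<union> OV"
    proof cases
      case 1 then show ?thesis by (simp add: p OU_def)
    next
      case 2 then show ?thesis using d e t1 by (simp add: p OU_def y0_def)
    next
      case 3
      show ?thesis
      proof (cases "norm (Y s - y0) < \<epsilon>")
        case True then show ?thesis using 3 d by (simp add: p OU_def)
      next
        case False then show ?thesis using 3 t1 e by (simp add: p OV_def)
      qed
    next
      case 4 then show ?thesis using far t1 e by (simp add: p OV_def y0_def)
    next
      case 5 then show ?thesis by (simp add: p OV_def)
    qed
  qed
  have disj: "OU \<inter> OV \<inter> G = {}"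
  proof (rule ccontr)
    assume "OU \<inter> OV \<inter> G \<noteq> {}"
    then obtain s where sU: "(s, Y s) \<in> OU" and sV: "(s, Y s) \<in> OV" by (auto simp: G_def)
    show False
    proof (cases "s < s0")
      case True then show False using sV t1 by (auto simp: OV_def)
    next
      case False
      then have s1: "s0 - \<delta> < s" "s < t1" "norm (Y s - y0) < \<epsilon>" using sU by (auto simp: OU_def)
      then have s2: "s0 < s" "s < s0 + \<delta>" "\<epsilon>/2 < norm (Y s - y0)" using sV by (auto simp: OV_def)
      have "\<bar>s - s0\<bar> < \<delta>" using s2 d by simp
      then have "norm (Y s - y0) < \<epsilon>/2" using gap s1(3) by (simp add: y0_def)
      then show False using s2(3) by simp
    qed
  qed
  have "OU \<inter> G = {} \<or> OV \<inter> G = {}"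
    using connectedD[OF conn[folded G_def] oU oV disj cover] .
  moreover have "(s0, Y s0) \<in> OU \<inter> G" using d e t1 by (simp add: OU_def G_def y0_def)
  moreover have "(t1, Y t1) \<in> OV \<inter> G" using far e t1 by (simp add: OV_def G_def y0_def)
  ultimately show False by blast
qed

lemma graph_cont:
  fixes X :: "real \<Rightarrow> 'a::real_normed_vector"
  assumes conn: "connected (range (\<lambda>s. (s, X s)))"
    and gapf: "\<And>s0. \<exists>\<epsilon>0>0. \<forall>\<epsilon>. 0 < \<epsilon> \<longrightarrow> \<epsilon> \<le> \<epsilon>0 \<longrightarrow> (\<exists>\<delta>>0. \<forall>s. \<bar>s - s0\<bar> < \<delta> \<longrightarrow>
        norm (X s - X s0) < \<epsilon> \<longrightarrow> norm (X s - X s0) < \<epsilon>/2)"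
  shows "continuous_on UNIV X"
proof (rule continuous_at_imp_continuous_on, rule ballI)
  fix s0 :: real
  have conn': "connected (range (\<lambda>s. (s, X (- s))))"
  proof -
    have "range (\<lambda>s. (s, X (- s))) = (\<lambda>p. (- fst p, snd p)) ` range (\<lambda>s. (s, X s))"
      by (auto simp: image_iff intro!: exI[where x="- _"])
    moreover have "connected \<dots>"
      by (intro connected_continuous_image conn continuous_intros continuous_on_id)
    ultimately show ?thesis by simp
  qed
  obtain \<epsilon>0 where e0: "\<epsilon>0 > 0" and G: "\<And>\<epsilon>. 0 < \<epsilon> \<Longrightarrow> \<epsilon> \<le> \<epsilon>0 \<Longrightarrow> (\<exists>\<delta>>0. \<forall>s. \<bar>s - s0\<bar> < \<delta> \<longrightarrow>
        norm (X s - X s0) < \<epsilon> \<longrightarrow> norm (X s - X s0) < \<epsilon>/2)"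
    using gapf[of s0] by blast
  show "isCont X s0"
    unfolding continuous_at_eps_delta
  proof (intro allI impI)
    fix e :: real assume "0 < e"
    define \<epsilon> where "\<epsilon> = min e \<epsilon>0"
    have ep: "0 < \<epsilon>" "\<epsilon> \<le> \<epsilon>0" "\<epsilon> \<le> e" using \<open>0 < e\<close> e0 by (auto simp: \<epsilon>_def)
    obtain \<delta> where d: "\<delta> > 0" and gp: "\<And>s. \<bar>s - s0\<bar> < \<delta> \<Longrightarrow>
        norm (X s - X s0) < \<epsilon> \<Longrightarrow> norm (X s - X s0) < \<epsilon>/2"
      using G[OF ep(1,2)] by blast
    have "dist (X t) (X s0) < e" if t: "dist t s0 < \<delta>" for t
    proof -
      have "norm (X t - X s0) < \<epsilon>"
      proof (cases t s0 rule: linorder_cases)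
        case less
        have "norm (X (- (- t)) - X (- (- s0))) < \<epsilon>"
        proof (rule graph_sep[of "\<lambda>s. X (- s)" \<delta> \<epsilon> "- s0" "- t", OF conn' d ep(1)])
          fix s assume "\<bar>s - (- s0)\<bar> < \<delta>" "norm (X (- s) - X (- (- s0))) < \<epsilon>"
          then show "norm (X (- s) - X (- (- s0))) < \<epsilon>/2" using gp[of "- s"] by (simp add: abs_minus_commute)
        next
          show "- s0 < - t" using less by simp
          show "- t < - s0 + \<delta>" using t less by (simp add: dist_real_def)
        qed
        then show ?thesis by simp
      next
        case equal then show ?thesis using ep by simp
      next
        case greater
        show ?thesis
        proof (rule graph_sep[of X \<delta> \<epsilon> s0 t, OF conn d ep(1)])
          fix s assume "\<bar>s - s0\<bar> < \<delta>" "norm (X s - X s0) < \<epsilon>"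
          then show "norm (X s - X s0) < \<epsilon>/2" using gp by blast
        next
          show "s0 < t" using greater by simp
          show "t < s0 + \<delta>" using t greater by (simp add: dist_real_def)
        qed
      qed
      then show ?thesis using ep by (simp add: dist_norm)
    qed
    then show "\<exists>\<delta>>0. \<forall>x'. dist x' s0 < \<delta> \<longrightarrow> dist (X x') (X s0) < e" using d by blast
  qed
qed


lemma C1_deriv:
  assumes "C1_map f"
  shows "(f has_derivative frechet_derivative f (at p)) (at p)"
    and "bounded_linear (frechet_derivative f (at p))"
proof -
  show 1: "(f has_derivative frechet_derivative f (at p)) (at p)"
    using assms frechet_derivative_works unfolding C1_map_def by blast
  show "bounded_linear (frechet_derivative f (at p))"
    using has_derivative_bounded_linear[OF 1] .
qed

lemma C1_cont: "C1_map f \<Longrightarrow> continuous_on UNIV f"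
  unfolding C1_map_def
  by (intro continuous_at_imp_continuous_on ballI differentiable_imp_continuous_within) auto

lemma Dx_apply:
  fixes f :: "(real^'l) \<times> (real^'m) \<Rightarrow> real^'l"
  assumes "C1_map f"
  shows "Dx f x l *v v = frechet_derivative f (at (x,l)) (v, 0)"
proof -
  have bl: "bounded_linear (\<lambda>v. frechet_derivative f (at (x,l)) (v, 0))"
    by (rule bounded_linear_compose[OF C1_deriv(2)[OF assms]])
      (intro bounded_linear_Pair bounded_linear_ident bounded_linear_zero)
  show ?thesis unfolding Dx_def using matrix_vector_mul(3)[OF bl] by metis
qed

lemma Dx_cont:
  fixes f :: "(real^'l) \<times> (real^'m) \<Rightarrow> real^'l"
  assumes "C1_map f"
  shows "continuous_on UNIV (\<lambda>p. Dx f (fst p) (snd p))"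
proof -
  have eq: "Dx f (fst p) (snd p) = (\<chi> i j. blinfun_apply (Blinfun (frechet_derivative f (at p))) (axis j 1, 0) $ i)" for p
    using bounded_linear_Blinfun_apply[OF C1_deriv(2)[OF assms]] by (simp add: Dx_def matrix_def)
  have c: "continuous_on UNIV (\<lambda>p. Blinfun (frechet_derivative f (at p)))"
    using assms by (simp add: C1_map_def)
  have "continuous_on UNIV (\<lambda>p. \<chi> i j. blinfun_apply (Blinfun (frechet_derivative f (at p))) (axis j 1, 0) $ i)"
    by (intro continuous_intros blinfun.continuous_on c continuous_on_const)
  then show ?thesis unfolding eq .
qed

lemma fixed_point_gap:
  fixes f :: "(real^'l) \<times> (real^'m) \<Rightarrow> real^'l" and \<Lambda> :: "real \<Rightarrow> real^'m"
  assumes C1: "C1_map f" and cL: "continuous_on UNIV \<Lambda>"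
    and fp0: "f (x0, \<Lambda> s0) = x0"
    and inj0: "\<And>v. Dx f x0 (\<Lambda> s0) *v v = v \<Longrightarrow> v = 0"
  shows "\<exists>\<epsilon>0>0. \<forall>\<epsilon>. 0 < \<epsilon> \<longrightarrow> \<epsilon> \<le> \<epsilon>0 \<longrightarrow> (\<exists>\<delta>>0. \<forall>s x. \<bar>s - s0\<bar> < \<delta> \<longrightarrow> f (x, \<Lambda> s) = x \<longrightarrow>
           norm (x - x0) < \<epsilon> \<longrightarrow> norm (x - x0) < \<epsilon>/2)"
proof -
  define l0 where "l0 = \<Lambda> s0"
  define A0 where "A0 = Dx f x0 l0"
  define fd where "fd p = frechet_derivative f (at p)" for p
  define L where "L v = v - A0 *v v" for v
  have blL: "bounded_linear L" unfolding L_def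
    by (intro bounded_linear_sub bounded_linear_ident matrix_vector_mul_bounded_linear)
  have injL: "inj L"
  proof (rule injI)
    fix x y assume "L x = L y"
    then have "A0 *v (x - y) = x - y"
      by (simp add: L_def matrix_vector_mult_diff_distrib algebra_simps)
    then have "x - y = 0" unfolding A0_def l0_def by (rule inj0)
    then show "x = y" by simp
  qed
  obtain c where c: "0 < c" "\<And>v. c * norm v \<le> norm (L v)"
    using linear_inj_bounded_below_pos[OF bounded_linear.linear[OF blL] injL] by blast
  have cG: "continuous_on UNIV (\<lambda>p. Blinfun (fd p))" using C1 by (simp add: C1_map_def fd_def)
  obtain \<eta> where eta: "\<eta> > 0" and etaG: "\<And>p. dist p (x0, l0) < \<eta> \<Longrightarrow>
      dist (Blinfun (fd p)) (Blinfun (fd (x0, l0))) < c/2"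
    using cG[unfolded continuous_on_iff] c(1) by (metis UNIV_I half_gt_zero)
  have blfd: "bounded_linear (fd p)" for p using C1_deriv(2)[OF C1] by (simp add: fd_def)
  have dev: "norm (fd p (v, 0) - fd (x0, l0) (v, 0)) \<le> c/2 * norm v" if "dist p (x0, l0) < \<eta>" for p v
  proof -
    have "fd p (v, 0) - fd (x0, l0) (v, 0) = blinfun_apply (Blinfun (fd p) - Blinfun (fd (x0, l0))) (v, 0)"
      by (simp add: blinfun.diff_left bounded_linear_Blinfun_apply[OF blfd])
    also have "norm \<dots> \<le> norm (Blinfun (fd p) - Blinfun (fd (x0, l0))) * norm (v, 0::real^'m)"
      by (rule norm_blinfun)
    also have "\<dots> \<le> c/2 * norm v"
      unfolding norm_Pair2 using etaG[OF that] by (intro mult_right_mono) (auto simp: dist_norm)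
    finally show ?thesis .
  qed
  have A0fd: "A0 *v v = fd (x0, l0) (v, 0)" for v
    by (simp add: A0_def fd_def Dx_apply[OF C1])
  have cf: "continuous_on UNIV f" by (rule C1_cont[OF C1])
  have ch: "continuous_on UNIV (\<lambda>s. f (x0, \<Lambda> s))"
    by (rule continuous_on_compose2[OF cf _ subset_UNIV]) (intro continuous_intros cL)
  show ?thesis
  proof (rule exI[of _ "\<eta>/2"], intro conjI allI impI)
    show "0 < \<eta>/2" using eta by simp
    fix \<epsilon> :: real assume e: "0 < \<epsilon>" "\<epsilon> \<le> \<eta>/2"
    obtain \<delta>1 where d1: "\<delta>1 > 0" "\<And>s. dist s s0 < \<delta>1 \<Longrightarrow> dist (\<Lambda> s) (\<Lambda> s0) < \<eta>/2"
      using cL[unfolded continuous_on_iff] eta by (metis UNIV_I half_gt_zero)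
    obtain \<delta>2 where d2: "\<delta>2 > 0" "\<And>s. dist s s0 < \<delta>2 \<Longrightarrow> dist (f (x0, \<Lambda> s)) (f (x0, \<Lambda> s0)) < c * \<epsilon> / 4"
      using ch[unfolded continuous_on_iff] c(1) e(1)
      by (metis UNIV_I divide_pos_pos mult_pos_pos zero_less_numeral)
    show "\<exists>\<delta>>0. \<forall>s x. \<bar>s - s0\<bar> < \<delta> \<longrightarrow> f (x, \<Lambda> s) = x \<longrightarrow> norm (x - x0) < \<epsilon> \<longrightarrow> norm (x - x0) < \<epsilon>/2"
    proof (intro exI[of _ "min \<delta>1 \<delta>2"] conjI allI impI)
      show "0 < min \<delta>1 \<delta>2" using d1 d2 by simp
      fix s x assume s: "\<bar>s - s0\<bar> < min \<delta>1 \<delta>2" and fx: "f (x, \<Lambda> s) = x" and xe: "norm (x - x0) < \<epsilon>"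
      define l where "l = \<Lambda> s"
      have ll0: "norm (l - l0) < \<eta>/2" using d1(2)[of s] s by (simp add: dist_norm l_def l0_def dist_real_def)
      have fl: "norm (f (x0, l) - x0) < c * \<epsilon> / 4"
        using d2(2)[of s] s fp0 by (simp add: dist_norm l_def dist_real_def)
      define S where "S = ball x0 (\<eta>/2)"
      define \<phi> where "\<phi> y = f (y, l) - A0 *v y" for y
      have der: "(\<phi> has_derivative (\<lambda>v. fd (y, l) (v, 0) - A0 *v v)) (at y within S)" for y
      proof -
        have "((\<lambda>y. (y, l)) has_derivative (\<lambda>v. (v, 0))) (at y)"
          by (intro has_derivative_Pair has_derivative_ident has_derivative_const)
        from has_derivative_compose[OF this C1_deriv(1)[OF C1]]
        have "((\<lambda>y. f (y, l)) has_derivative (\<lambda>v. fd (y, l) (v, 0))) (at y)" by (simp add: fd_def)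
        moreover have "((\<lambda>y. A0 *v y) has_derivative (\<lambda>v. A0 *v v)) (at y)"
          by (rule bounded_linear_imp_has_derivative[OF matrix_vector_mul_bounded_linear])
        ultimately have "(\<phi> has_derivative (\<lambda>v. fd (y, l) (v, 0) - A0 *v v)) (at y)"
          unfolding \<phi>_def by (rule has_derivative_diff)
        then show ?thesis by (rule has_derivative_at_withinI)
      qed
      have bnd: "onorm (\<lambda>v. fd (y, l) (v, 0) - A0 *v v) \<le> c/2" if y: "y \<in> S" for y
      proof (rule onorm_bound)
        show "0 \<le> c/2" using c by simp
        fix v
        have "dist (y, l) (x0, l0) \<le> norm (y - x0) + norm (l - l0)"
          using norm_Pair_le[of "y - x0" "l - l0"] by (simp add: dist_norm)
        also have "\<dots> < \<eta>" using y ll0 by (simp add: S_def dist_norm norm_minus_commute)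
        finally show "norm (fd (y, l) (v, 0) - A0 *v v) \<le> c/2 * norm v"
          unfolding A0fd by (rule dev)
      qed
      have xS: "x \<in> S" and x0S: "x0 \<in> S" using xe e eta by (auto simp: S_def dist_norm norm_minus_commute)
      have mvt: "norm (\<phi> x - \<phi> x0) \<le> c/2 * norm (x - x0)"
        by (rule differentiable_bound[OF convex_ball[of x0 "\<eta>/2", folded S_def] der bnd xS x0S])
      have id: "L (x - x0) = (\<phi> x - \<phi> x0) + (f (x0, l) - x0)"
        using fx by (simp add: L_def \<phi>_def l_def matrix_vector_mult_diff_distrib algebra_simps)
      have "c * norm (x - x0) \<le> norm (L (x - x0))" by (rule c(2))
      also have "\<dots> \<le> norm (\<phi> x - \<phi> x0) + norm (f (x0, l) - x0)" unfolding id by (rule norm_triangle_ineq)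
      also have "\<dots> < c/2 * norm (x - x0) + c * \<epsilon> / 4" using mvt fl by linarith
      finally have "c/2 * norm (x - x0) < c/2 * (\<epsilon>/2)" by (simp add: algebra_simps)
      then show "norm (x - x0) < \<epsilon>/2" using c(1) by (simp add: mult_less_cancel_left_pos)
    qed
  qed
qed


lemma finite_S: "finite {z. Determinants.det (Finite_Cartesian_Product.mat z - cmat (A::real^'n^'n)) = 0}"
proof -
  obtain ix :: "nat \<Rightarrow> 'n" where bij: "bij_betw ix {0..<CARD('n)} UNIV"
    using ex_bij_betw_nat_finite[of "UNIV::'n set"] by auto
  have "{z. Determinants.det (Finite_Cartesian_Product.mat z - cmat A) = 0} = spectrum (toJ ix (cmat A))"
  proof (rule Set.set_eqI)
    fix z
    have "Determinants.det (Finite_Cartesian_Product.mat z - cmat A) = 0 \<longleftrightarrow> (\<exists>x. x \<noteq> 0 \<and> cmat A *v x = z *s x)"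
      by (rule det_eig)
    also have "\<dots> \<longleftrightarrow> eigenvalue (toJ ix (cmat A)) z" by (rule eig_toJ[OF bij, symmetric])
    finally show "z \<in> {z. Determinants.det (Finite_Cartesian_Product.mat z - cmat A) = 0} \<longleftrightarrow> z \<in> spectrum (toJ ix (cmat A))"
      by (simp add: spectrum_def)
  qed
  then show ?thesis using card_finite_spectrum(1)[OF toJ_carrier] by simp
qed

lemma sr_inj:
  fixes A :: "real^'n^'n"
  assumes sr: "spectral_radius_mat A < 1" and v: "A *v v = v"
  shows "v = 0"
proof (rule ccontr)
  assume v0: "v \<noteq> 0"
  define w where "w = (\<chi> i. complex_of_real (v $ i))"
  have w0: "w \<noteq> 0"
  proof
    assume "w = 0"
    then have "v $ i = 0" for i by (simp add: w_def Finite_Cartesian_Product.vec_eq_iff)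
    then show False using v0 by (simp add: Finite_Cartesian_Product.vec_eq_iff)
  qed
  have "cmat A *v w = 1 *s w"
  proof -
    have "(cmat A *v w) $ i = complex_of_real ((A *v v) $ i)" for i
      by (simp add: matrix_vector_mult_def cmat_def w_def)
    then show ?thesis using v by (simp add: Finite_Cartesian_Product.vec_eq_iff w_def)
  qed
  then have "1 \<in> {z. Determinants.det (Finite_Cartesian_Product.mat z - cmat A) = 0}"
    using det_eig w0 by blast
  then have mem: "cmod 1 \<in> {cmod z |z. Determinants.det (Finite_Cartesian_Product.mat z - cmat A) = 0}"
    by blast
  have fin: "finite {cmod z |z. Determinants.det (Finite_Cartesian_Product.mat z - cmat A) = 0}"
    by (rule finite_subset[OF _ finite_imageI[OF finite_S[of A], of cmod]]) auto
  have "cmod 1 \<le> spectral_radius_mat A"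
    unfolding spectral_radius_mat_def by (rule Max_ge[OF fin mem])
  then show False using sr by simp
qed

theorem mainTheorem10:
  fixes f :: "(real^'l) \<times> (real^'m) \<Rightarrow> real^'l"
    and \<Lambda> :: "real \<Rightarrow> real^'m" and lm lp :: "real^'m"
    and X :: "real \<Rightarrow> real^'l" and Xm Xp :: "real^'l"
  assumes "C1_map f"
    and "parameter_shift \<Lambda> lm lp"
    and "stable_path f \<Lambda> lm lp X Xm Xp"
  shows "\<exists>N::nat. \<forall>s::real. \<forall>n\<ge>N.
           onorm (((*v) (Dx f (X s) (\<Lambda> s))) ^^ n) < 1/4"
proof -
  from assms(2) obtain \<Lambda>' where dL: "\<And>s. (\<Lambda> has_vector_derivative \<Lambda>' s) (at s)"
    and Ltop: "(\<Lambda> \<longlongrightarrow> lp) at_top" and Lbot: "(\<Lambda> \<longlongrightarrow> lm) at_bot"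
    unfolding parameter_shift_def by blast
  have cL: "continuous_on UNIV \<Lambda>"
    using dL has_vector_derivative_continuous by (intro continuous_at_imp_continuous_on) blast
  have fixp: "\<And>s. f (X s, \<Lambda> s) = X s" using assms(3) unfolding stable_path_def by blast
  have conn: "connected (range (\<lambda>s. (s, X s)))" using assms(3) unfolding stable_path_def by blast
  have Xtop: "(X \<longlongrightarrow> Xp) at_top" using assms(3) unfolding stable_path_def by blast
  have Xbot: "(X \<longlongrightarrow> Xm) at_bot" using assms(3) unfolding stable_path_def by blast
  have srs: "\<And>s. spectral_radius_mat (Dx f (X s) (\<Lambda> s)) < 1" using assms(3) unfolding stable_path_def by blast
  have srp: "spectral_radius_mat (Dx f Xp lp) < 1" using assms(3) unfolding stable_path_def by blast
  have srm: "spectral_radius_mat (Dx f Xm lm) < 1" using assms(3) unfolding stable_path_def by blast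
  have cX: "continuous_on UNIV X"
  proof (rule graph_cont[OF conn])
    fix s0
    obtain \<epsilon>0 where e0: "\<epsilon>0 > 0" and H: "\<forall>\<epsilon>. 0 < \<epsilon> \<longrightarrow> \<epsilon> \<le> \<epsilon>0 \<longrightarrow> (\<exists>\<delta>>0. \<forall>s x. \<bar>s - s0\<bar> < \<delta> \<longrightarrow>
        f (x, \<Lambda> s) = x \<longrightarrow> norm (x - X s0) < \<epsilon> \<longrightarrow> norm (x - X s0) < \<epsilon>/2)"
      using fixed_point_gap[OF assms(1) cL fixp[of s0] sr_inj[OF srs[of s0]]] by blast
    show "\<exists>\<epsilon>0>0. \<forall>\<epsilon>. 0 < \<epsilon> \<longrightarrow> \<epsilon> \<le> \<epsilon>0 \<longrightarrow> (\<exists>\<delta>>0. \<forall>s. \<bar>s - s0\<bar> < \<delta> \<longrightarrow>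
        norm (X s - X s0) < \<epsilon> \<longrightarrow> norm (X s - X s0) < \<epsilon>/2)"
    proof (rule exI[of _ \<epsilon>0], intro conjI allI impI)
      show "0 < \<epsilon>0" by (rule e0)
      fix \<epsilon> :: real assume "0 < \<epsilon>" "\<epsilon> \<le> \<epsilon>0"
      then obtain \<delta> where d: "\<delta> > 0" "\<forall>s x. \<bar>s - s0\<bar> < \<delta> \<longrightarrow>
        f (x, \<Lambda> s) = x \<longrightarrow> norm (x - X s0) < \<epsilon> \<longrightarrow> norm (x - X s0) < \<epsilon>/2"
        using H by blast
      show "\<exists>\<delta>>0. \<forall>s. \<bar>s - s0\<bar> < \<delta> \<longrightarrow> norm (X s - X s0) < \<epsilon> \<longrightarrow> norm (X s - X s0) < \<epsilon>/2"
        using d fixp by blast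
    qed
  qed
  define G where "G p = Dx f (fst p) (snd p)" for p
  have cG: "continuous_on UNIV G" unfolding G_def by (rule Dx_cont[OF assms(1)])
  define Am where "Am s = G (X s, \<Lambda> s)" for s
  have Am_eq: "Am s = Dx f (X s) (\<Lambda> s)" for s by (simp add: Am_def G_def)
  have cAm: "continuous_on UNIV Am" unfolding Am_def
    by (rule continuous_on_compose2[OF cG _ subset_UNIV]) (intro continuous_intros cX cL)
  have isG: "isCont G p" for p using cG continuous_on_eq_continuous_at open_UNIV by blast
  have Atop: "(Am \<longlongrightarrow> G (Xp, lp)) at_top" unfolding Am_def
    by (rule isCont_tendsto_compose[OF isG]) (intro tendsto_Pair Xtop Ltop)
  have Abot: "(Am \<longlongrightarrow> G (Xm, lm)) at_bot" unfolding Am_def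
    by (rule isCont_tendsto_compose[OF isG]) (intro tendsto_Pair Xbot Lbot)
  obtain Up Np where Up: "open Up" "G (Xp, lp) \<in> Up" "\<forall>B\<in>Up. \<forall>n\<ge>Np. enorm (mpow B n) < 1/4"
    using local_uniform[of "G (Xp, lp)"] srp by (auto simp: G_def)
  obtain Tp where Tp: "\<forall>s\<ge>Tp. Am s \<in> Up"
    using topological_tendstoD[OF Atop Up(1) Up(2)] unfolding eventually_at_top_linorder by blast
  obtain Um Nm where Um: "open Um" "G (Xm, lm) \<in> Um" "\<forall>B\<in>Um. \<forall>n\<ge>Nm. enorm (mpow B n) < 1/4"
    using local_uniform[of "G (Xm, lm)"] srm by (auto simp: G_def)
  obtain Tm where Tm: "\<forall>s\<le>Tm. Am s \<in> Um"
    using topological_tendstoD[OF Abot Um(1) Um(2)] unfolding eventually_at_bot_linorder by blast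
  define K where "K = Am ` {Tm..Tp}"
  have "compact K" unfolding K_def
    by (intro compact_continuous_image continuous_on_subset[OF cAm] compact_Icc) auto
  moreover have "\<And>A. A \<in> K \<Longrightarrow> spectral_radius_mat A < 1" using srs by (auto simp: K_def Am_eq)
  ultimately obtain N0 where N0: "\<forall>B\<in>K. \<forall>n\<ge>N0. enorm (mpow B n) < 1/4"
    using compact_uniform by blast
  show ?thesis
  proof (rule exI[of _ "max N0 (max Np Nm)"], intro allI impI)
    fix s :: real and n :: nat assume n: "max N0 (max Np Nm) \<le> n"
    have "enorm (mpow (Am s) n) < 1/4"
    proof (cases "Tp \<le> s")
      case True then show ?thesis using Tp Up(3) n by auto
    next
      case False
      show ?thesis
      proof (cases "s \<le> Tm")
        case True then show ?thesis using Tm Um(3) n by auto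
      next
        case False
        then have "Am s \<in> K" using \<open>\<not> Tp \<le> s\<close> by (auto simp: K_def)
        then show ?thesis using N0 n by auto
      qed
    qed
    then show "onorm ((*v) (Dx f (X s) (\<Lambda> s)) ^^ n) < 1/4"
      using onorm_le_enorm[of "mpow (Am s) n"] by (simp add: mpow_vec Am_eq)
  qed
qed

end
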